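(* Let $\boldsymbol{k}$ be a field of characteristic zero, $P=\boldsymbol{k}[x^1,x^2,x^3]$, $f=x^1x^2-x^3x^3$, $I=(f)$ and $A=P/I$, where $P$ carries the Poisson bracket determined by $\{x^1,x^2\}=4x^3$, $\{x^1,x^3\}=2x^1$, $\{x^2,x^3\}=-2x^2$ (so $I$ is a Poisson ideal and $A$ a Poisson algebra). Then there exists $\omega\in\operatorname{Alt}^2_A(\operatorname{Der}(A),A)$ which is a symplectic form on $\operatorname{Spec}(A)$, i.e. (i) $\omega$ is non-degenerate, (ii) $\mathrm d_{\mathrm{dR}}\omega=0$, and (iii) $\omega(\{a,\ \}+I\operatorname{Der}(P),\,X+I\operatorname{Der}(P))=X(a)+I$ for all $a\in P$ and all $X\in\operatorname{Der}_I(P)$.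
   Context: $\operatorname{Der}(A)$ is the $A$-module of $\boldsymbol{k}$-derivations of $A$, identified with $\operatorname{Der}_I(P)/I\operatorname{Der}(P)$ where $\operatorname{Der}_I(P)=\{X\in\operatorname{Der}(P):X(I)\subseteq I\}$; $(\operatorname{Der}(A),A)$ is a Lie-Rinehart algebra with the commutator bracket. $\operatorname{Alt}^m_A(\operatorname{Der}(A),A)$ denotes alternating $A$-multilinear maps $\operatorname{Der}(A)^m\to A$, and $\mathrm d_{\mathrm{dR}}$ is the Koszul differential $(\mathrm d\omega)(X_0,\dots,X_m)=\sum_i(-1)^iX_i(\omega(X_0,\dots,\widehat{X_i},\dots,X_m))+\sum_{i<j}(-1)^{i+j}\omega([X_i,X_j],X_0,\dots,\widehat{X_i},\dots,\widehat{X_j},\dots,X_m)$ (the naive de Rham complex). A 2-form $\omega$ is non-degenerate if for $X\in\operatorname{Der}(A)$, $\omega(X,Y)=0$ for all $Y\in\operatorname{Der}(A)$ implies $X=0$. *)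

theory Defs
  imports "HOL-Library.Poly_Mapping"
begin

datatype var = V1 | V2 | V3

text \<open>P = k[x^1,x^2,x^3]: polynomials as finitely supported maps from monomials
 (finitely supported exponent vectors var =>0 nat) to coefficients.\<close>
type_synonym 'k pol = "(var \<Rightarrow>\<^sub>0 nat) \<Rightarrow>\<^sub>0 'k"

definition pvar :: "var \<Rightarrow> 'k::comm_ring_1 pol" where
  "pvar v = Poly_Mapping.single (Poly_Mapping.single v 1) 1"

definition pconst :: "'k::comm_ring_1 \<Rightarrow> 'k pol" where
  "pconst c = Poly_Mapping.single 0 c"

definition pderiv_var :: "var \<Rightarrow> 'k::comm_ring_1 pol \<Rightarrow> 'k pol" where
  "pderiv_var v p = (\<Sum>m::var \<Rightarrow>\<^sub>0 nat\<in>Poly_Mapping.keys p.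
      Poly_Mapping.single (m - Poly_Mapping.single v (1::nat)) (of_nat (Poly_Mapping.lookup m v) * Poly_Mapping.lookup p m))"

definition fpol :: "'k::comm_ring_1 pol" where
  "fpol = pvar V1 * pvar V2 - pvar V3 * pvar V3"

definition inI :: "'k::comm_ring_1 pol \<Rightarrow> bool" where
  "inI p \<longleftrightarrow> fpol dvd p"

definition pbr :: "'k::comm_ring_1 pol \<Rightarrow> 'k pol \<Rightarrow> 'k pol" where
  "pbr p q =
     pconst 4 * pvar V3 * (pderiv_var V1 p * pderiv_var V2 q - pderiv_var V2 p * pderiv_var V1 q)
   + pconst 2 * pvar V1 * (pderiv_var V1 p * pderiv_var V3 q - pderiv_var V3 p * pderiv_var V1 q)
   - pconst 2 * pvar V2 * (pderiv_var V2 p * pderiv_var V3 q - pderiv_var V3 p * pderiv_var V2 q)"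

definition ham :: "'k::comm_ring_1 pol \<Rightarrow> 'k pol \<Rightarrow> 'k pol" where
  "ham a = (\<lambda>q. pbr a q)"

definition DerP :: "('k::comm_ring_1 pol \<Rightarrow> 'k pol) set" where
  "DerP = {D. (\<forall>p q. D (p + q) = D p + D q)
            \<and> (\<forall>c p. D (pconst c * p) = pconst c * D p)
            \<and> (\<forall>p q. D (p * q) = p * D q + q * D p)}"

definition DerIP :: "('k::comm_ring_1 pol \<Rightarrow> 'k pol) set" where
  "DerIP = {D \<in> DerP. \<forall>p. inI p \<longrightarrow> inI (D p)}"

text \<open>I Der(P); since I = (f) is principal this is f Der(P).\<close>
definition IDerP :: "('k::comm_ring_1 pol \<Rightarrow> 'k pol) set" where
  "IDerP = {X. \<exists>D\<in>DerP. \<forall>p. X p = fpol * D p}"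

text \<open>Der(A) = Der_I(P)/I Der(P): equality of classes.\<close>
definition der_eq :: "('k::comm_ring_1 pol \<Rightarrow> 'k pol) \<Rightarrow> ('k pol \<Rightarrow> 'k pol) \<Rightarrow> bool" where
  "der_eq X Y \<longleftrightarrow> (\<lambda>p. X p - Y p) \<in> IDerP"

definition der_bracket :: "('k::comm_ring_1 pol \<Rightarrow> 'k pol) \<Rightarrow> ('k pol \<Rightarrow> 'k pol) \<Rightarrow> 'k pol \<Rightarrow> 'k pol" where
  "der_bracket X Y = (\<lambda>p. X (Y p) - Y (X p))"

text \<open>An element of Alt^2_A(Der(A),A), represented by a map on representatives
 omega : Der_I(P) x Der_I(P) -> P that is well defined modulo I Der(P) (inputs) and I (values),
 A-bilinear and alternating modulo I.\<close>
definition is_Alt2 :: "(('k::comm_ring_1 pol \<Rightarrow> 'k pol) \<Rightarrow> ('k pol \<Rightarrow> 'k pol) \<Rightarrow> 'k pol) \<Rightarrow> bool" where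
  "is_Alt2 \<omega> \<longleftrightarrow>
     (\<forall>X\<in>DerIP. \<forall>X'\<in>DerIP. \<forall>Y\<in>DerIP. der_eq X X' \<longrightarrow>
         inI (\<omega> X Y - \<omega> X' Y) \<and> inI (\<omega> Y X - \<omega> Y X'))
   \<and> (\<forall>X\<in>DerIP. \<forall>Y\<in>DerIP. \<forall>Z\<in>DerIP. \<forall>g h.
         inI (\<omega> (\<lambda>p. g * X p + h * Y p) Z - (g * \<omega> X Z + h * \<omega> Y Z)))
   \<and> (\<forall>X\<in>DerIP. inI (\<omega> X X))"

definition nondegenerate :: "(('k::comm_ring_1 pol \<Rightarrow> 'k pol) \<Rightarrow> ('k pol \<Rightarrow> 'k pol) \<Rightarrow> 'k pol) \<Rightarrow> bool" where
  "nondegenerate \<omega> \<longleftrightarrow>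
     (\<forall>X\<in>DerIP. (\<forall>Y\<in>DerIP. inI (\<omega> X Y)) \<longrightarrow> X \<in> IDerP)"

definition dR2 :: "(('k::comm_ring_1 pol \<Rightarrow> 'k pol) \<Rightarrow> ('k pol \<Rightarrow> 'k pol) \<Rightarrow> 'k pol)
     \<Rightarrow> ('k pol \<Rightarrow> 'k pol) \<Rightarrow> ('k pol \<Rightarrow> 'k pol) \<Rightarrow> ('k pol \<Rightarrow> 'k pol) \<Rightarrow> 'k pol" where
  "dR2 \<omega> X0 X1 X2 =
       X0 (\<omega> X1 X2) - X1 (\<omega> X0 X2) + X2 (\<omega> X0 X1)
     - \<omega> (der_bracket X0 X1) X2 + \<omega> (der_bracket X0 X2) X1 - \<omega> (der_bracket X1 X2) X0"

definition dR_closed :: "(('k::comm_ring_1 pol \<Rightarrow> 'k pol) \<Rightarrow> ('k pol \<Rightarrow> 'k pol) \<Rightarrow> 'k pol) \<Rightarrow> bool" where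
  "dR_closed \<omega> \<longleftrightarrow> (\<forall>X0\<in>DerIP. \<forall>X1\<in>DerIP. \<forall>X2\<in>DerIP. inI (dR2 \<omega> X0 X1 X2))"

end

theory Submission
  imports Defs
begin

instantiation var :: linorder
begin
definition less_eq_var :: "var \<Rightarrow> var \<Rightarrow> bool" where
  "less_eq_var a b \<longleftrightarrow> (case_var (0::nat) 1 2 a) \<le> case_var 0 1 2 b"
definition less_var :: "var \<Rightarrow> var \<Rightarrow> bool" where
  "less_var a b \<longleftrightarrow> (case_var (0::nat) 1 2 a) < case_var 0 1 2 b"
instance by standard (auto simp: less_eq_var_def less_var_def split: var.splits)
end

lemma pol_sum_monoms:
  "(p::('a \<Rightarrow>\<^sub>0 'b::comm_monoid_add)) = (\<Sum>m\<in>Poly_Mapping.keys p. Poly_Mapping.single m (Poly_Mapping.lookup p m))"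
proof (rule poly_mapping_eqI)
  fix k
  have "Poly_Mapping.lookup (\<Sum>m\<in>Poly_Mapping.keys p. Poly_Mapping.single m (Poly_Mapping.lookup p m)) k
     = (\<Sum>m\<in>Poly_Mapping.keys p. (if m = k then Poly_Mapping.lookup p m else 0))"
    by (simp add: lookup_sum lookup_single when_def)
  also have "\<dots> = Poly_Mapping.lookup p k"
    by (simp add: sum.delta' in_keys_iff)
  finally show "Poly_Mapping.lookup p k = Poly_Mapping.lookup (\<Sum>m\<in>Poly_Mapping.keys p. Poly_Mapping.single m (Poly_Mapping.lookup p m)) k" by simp
qed

lemma pol_induct[case_names zero single add]:
  fixes p :: "'a \<Rightarrow>\<^sub>0 'b::comm_monoid_add"
  assumes "P 0" "\<And>m c. P (Poly_Mapping.single m c)" "\<And>p q. P p \<Longrightarrow> P q \<Longrightarrow> P (p+q)"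
  shows "P p"
proof -
  have "\<And>S. finite S \<Longrightarrow> P (\<Sum>m\<in>S. Poly_Mapping.single m (Poly_Mapping.lookup p m))"
  proof -
    fix S :: "'a set" assume "finite S"
    then show "P (\<Sum>m\<in>S. Poly_Mapping.single m (Poly_Mapping.lookup p m))"
      by (induction S rule: finite_induct) (auto simp: assms)
  qed
  then show ?thesis by (metis pol_sum_monoms finite_keys)
qed

abbreviation ev :: "var \<Rightarrow> var \<Rightarrow>\<^sub>0 nat" where "ev v \<equiv> Poly_Mapping.single v 1"

lemma pd_sum:
  assumes "finite S" "Poly_Mapping.keys p \<subseteq> S"
  shows "pderiv_var v p = (\<Sum>m\<in>S. Poly_Mapping.single (m - ev v) (of_nat (Poly_Mapping.lookup m v) * Poly_Mapping.lookup p m))"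
  unfolding pderiv_var_def
  by (rule sum.mono_neutral_left[OF assms]) (auto simp: in_keys_iff)

lemma pd_add: "pderiv_var v (p + q) = pderiv_var v p + pderiv_var v q"
proof -
  let ?S = "Poly_Mapping.keys p \<union> Poly_Mapping.keys q \<union> Poly_Mapping.keys (p+q)"
  have f: "finite ?S" by simp
  show ?thesis
    apply (subst pd_sum[OF f, of "p+q"], blast)
    apply (subst pd_sum[OF f, of p], blast)
    apply (subst pd_sum[OF f, of q], blast)
    by (simp add: lookup_add distrib_left single_add sum.distrib)
qed

lemma pd_zero[simp]: "pderiv_var v 0 = 0"
  by (simp add: pderiv_var_def)

lemma pd_single: "pderiv_var v (Poly_Mapping.single m c) =
   Poly_Mapping.single (m - ev v) (of_nat (Poly_Mapping.lookup m v) * c)"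
  by (subst pd_sum[of "{m}"]) auto

lemma pd_uminus: "pderiv_var v (- p) = - pderiv_var v p"
  proof -
  have "pderiv_var v p + pderiv_var v (- p) = 0" using pd_add[of v p "-p"] by simp
  then show ?thesis by (simp add: eq_neg_iff_add_eq_0 add.commute)
qed

lemma pd_diff: "pderiv_var v (p - q) = pderiv_var v p - pderiv_var v q"
  by (simp only: diff_conv_add_uminus pd_add pd_uminus)

lemma single_mult_sub:
  assumes "Poly_Mapping.lookup n v \<noteq> 0"
  shows "m + (n - ev v) = m + n - ev v"
  using assms by (intro poly_mapping_eqI) (auto simp: lookup_add lookup_minus lookup_single when_def)

lemma pd_mult_single:
  fixes a b :: "'k::comm_ring_1"
  shows "pderiv_var v (Poly_Mapping.single m a * Poly_Mapping.single n b) =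
    Poly_Mapping.single m a * pderiv_var v (Poly_Mapping.single n b) +
    Poly_Mapping.single n b * pderiv_var v (Poly_Mapping.single m a)"
proof -
  have e1: "Poly_Mapping.single m a * Poly_Mapping.single (n - ev v) (of_nat (Poly_Mapping.lookup n v) * b)
     = Poly_Mapping.single (m + n - ev v) (of_nat (Poly_Mapping.lookup n v) * a * b)"
  proof (cases "Poly_Mapping.lookup n v = 0")
    case False
    then have "m + (n - ev v) = m + n - ev v" by (rule single_mult_sub)
    then show ?thesis by (simp add: mult_single ac_simps)
  qed (simp)
  have e2: "Poly_Mapping.single n b * Poly_Mapping.single (m - ev v) (of_nat (Poly_Mapping.lookup m v) * a)
     = Poly_Mapping.single (m + n - ev v) (of_nat (Poly_Mapping.lookup m v) * a * b)"
  proof (cases "Poly_Mapping.lookup m v = 0")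
    case False
    then have "n + (m - ev v) = m + n - ev v" using single_mult_sub[of m v n] by (simp add: add.commute)
    then show ?thesis by (simp add: mult_single ac_simps)
  qed (simp)
  show ?thesis
  proof -
    have "pderiv_var v (Poly_Mapping.single m a * Poly_Mapping.single n b)
      = Poly_Mapping.single (m + n - ev v) (of_nat (Poly_Mapping.lookup m v + Poly_Mapping.lookup n v) * (a * b))"
      by (simp add: mult_single pd_single lookup_add)
    also have "\<dots> = Poly_Mapping.single (m + n - ev v) (of_nat (Poly_Mapping.lookup n v) * a * b)
       + Poly_Mapping.single (m + n - ev v) (of_nat (Poly_Mapping.lookup m v) * a * b)"
      by (subst single_add[symmetric]) (simp add: algebra_simps)
    finally show ?thesis by (simp only: pd_single e1 e2)
  qed
qed

lemma pd_mult: "pderiv_var v ((p::'k::comm_ring_1 pol) * q) = p * pderiv_var v q + q * pderiv_var v p"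
proof (induction p rule: pol_induct)
  case zero then show ?case by simp
next
  case (single m c)
  show ?case
  proof (induction q rule: pol_induct)
    case zero then show ?case by simp
  next
    case (single n d) then show ?case by (rule pd_mult_single)
  next
    case (add q1 q2)
    have "pderiv_var v (Poly_Mapping.single m c * (q1 + q2)) = pderiv_var v (Poly_Mapping.single m c * q1) + pderiv_var v (Poly_Mapping.single m c * q2)"
      by (simp only: distrib_left pd_add)
    then show ?case by (simp only: add pd_add) (simp add: algebra_simps)
  qed
next
  case (add p1 p2)
  have "pderiv_var v ((p1 + p2) * q) = pderiv_var v (p1 * q) + pderiv_var v (p2 * q)"
    by (simp only: distrib_right pd_add)
  then show ?case by (simp only: add pd_add) (simp add: algebra_simps)
qed


lemma pconst_mult_single: "pconst c * Poly_Mapping.single m d = Poly_Mapping.single m (c * d)"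
  by (simp add: pconst_def mult_single)

lemma pconst_mult: "pconst a * pconst b = pconst (a * b)"
  by (simp add: pconst_def mult_single)

lemma pconst_1[simp]: "pconst 1 = 1" by (simp add: pconst_def)
lemma pconst_0[simp]: "pconst 0 = 0" by (simp add: pconst_def)
lemma pconst_numeral[simp]: "pconst (numeral n) = numeral n" by (simp add: pconst_def)

lemma pd_pconst[simp]: "pderiv_var v (pconst c) = 0"
  by (simp add: pconst_def pd_single)

lemma pd_pvar: "pderiv_var v (pvar w :: 'k::comm_ring_1 pol) = (if v = w then 1 else 0)"
  by (auto simp: pvar_def pd_single lookup_single)

lemma pd_1[simp]: "pderiv_var v (1 :: 'k::comm_ring_1 pol) = 0"
  using pd_pconst[of v "1::'k"] by simp

lemma pd_numeral[simp]: "pderiv_var v (numeral n :: 'k::comm_ring_1 pol) = 0"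
  using pd_pconst[of v "numeral n::'k"] by simp

lemma monom_decomp: "(m::var \<Rightarrow>\<^sub>0 nat) = Poly_Mapping.single V1 (Poly_Mapping.lookup m V1)
   + Poly_Mapping.single V2 (Poly_Mapping.lookup m V2) + Poly_Mapping.single V3 (Poly_Mapping.lookup m V3)"
proof (rule poly_mapping_eqI)
  fix k show "Poly_Mapping.lookup m k = Poly_Mapping.lookup (Poly_Mapping.single V1 (Poly_Mapping.lookup m V1)
   + Poly_Mapping.single V2 (Poly_Mapping.lookup m V2) + Poly_Mapping.single V3 (Poly_Mapping.lookup m V3)) k"
    by (cases k) (simp_all add: lookup_add lookup_single)
qed

lemma single_pow: "Poly_Mapping.single (Poly_Mapping.single v k) (1::'k::comm_ring_1) = pvar v ^ k"
proof (induction k)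
  case 0 then show ?case by simp
next
  case (Suc k)
  have "pvar v ^ Suc k = pvar v * Poly_Mapping.single (Poly_Mapping.single v k) (1::'k)" using Suc by simp
  also have "\<dots> = Poly_Mapping.single (Poly_Mapping.single v 1 + Poly_Mapping.single v k) 1"
    by (simp add: pvar_def mult_single)
  also have "Poly_Mapping.single v 1 + Poly_Mapping.single v k = Poly_Mapping.single v (Suc k)"
    by (simp flip: single_add)
  finally show ?case by simp
qed

lemma pol_induct2[case_names const var add mult]:
  fixes p :: "'k::comm_ring_1 pol"
  assumes c: "\<And>c. P (pconst c)" and v: "\<And>v. P (pvar v)"
    and a: "\<And>p q. P p \<Longrightarrow> P q \<Longrightarrow> P (p+q)" and m: "\<And>p q. P p \<Longrightarrow> P q \<Longrightarrow> P (p*q)"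
  shows "P p"
proof (induction p rule: pol_induct)
  case zero then show ?case using c[of 0] by simp
next
  case (add p q) then show ?case by (rule a)
next
  case (single mm cc)
  have pw: "P (pvar w ^ k)" for w k
  proof (induction k)
    case 0 then show ?case using c[of 1] by simp
  next
    case (Suc k) then show ?case using m v by simp
  qed
  let ?a = "Poly_Mapping.lookup mm V1" and ?b = "Poly_Mapping.lookup mm V2" and ?c = "Poly_Mapping.lookup mm V3"
  have "Poly_Mapping.single mm cc = pconst cc * Poly_Mapping.single mm 1"
    by (simp add: pconst_mult_single)
  also have "Poly_Mapping.single mm (1::'k) = Poly_Mapping.single (Poly_Mapping.single V1 ?a) 1 *
       Poly_Mapping.single (Poly_Mapping.single V2 ?b) 1 * Poly_Mapping.single (Poly_Mapping.single V3 ?c) 1"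
    by (subst monom_decomp) (simp add: mult_single)
  finally show ?case using pw c m by (simp add: single_pow)
qed

lemma DerP_D: assumes "D \<in> DerP"
  shows "D (p + q) = D p + D q" "D (pconst c * p) = pconst c * D p" "D (p * q) = p * D q + q * D p"
  using assms by (auto simp: DerP_def)

lemma DerP_0: assumes "D \<in> DerP" shows "D 0 = 0"
  using DerP_D(1)[OF assms, of 0 0] by simp

lemma DerP_uminus: assumes "D \<in> DerP" shows "D (- p) = - D p"
proof -
  have "D p + D (-p) = 0" using DerP_D(1)[OF assms, of p "-p"] DerP_0[OF assms] by simp
  then show ?thesis by (simp add: eq_neg_iff_add_eq_0 add.commute)
qed

lemma DerP_diff: assumes "D \<in> DerP" shows "D (p - q) = D p - D q"
  by (simp only: diff_conv_add_uminus DerP_D(1)[OF assms] DerP_uminus[OF assms])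

lemma DerP_1: assumes "D \<in> DerP" shows "D 1 = 0"
  using DerP_D(3)[OF assms, of 1 1] by simp

lemma DerP_pconst: assumes "D \<in> DerP" shows "D (pconst c) = 0"
  using DerP_D(2)[OF assms, of c 1] DerP_1[OF assms] by simp

lemma DerP_chain: assumes "D \<in> DerP"
  shows "D p = pderiv_var V1 p * D (pvar V1) + pderiv_var V2 p * D (pvar V2) + pderiv_var V3 p * D (pvar V3)"
proof (induction p rule: pol_induct2)
  case (const c) then show ?case by (simp add: DerP_pconst[OF assms])
next
  case (var v) then show ?case by (cases v) (simp_all add: pd_pvar)
next
  case (add p q) then show ?case by (simp add: DerP_D(1)[OF assms] pd_add algebra_simps)
next
  case (mult p q) then show ?case by (simp add: DerP_D(3)[OF assms] pd_mult algebra_simps)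
qed

definition vfield :: "'k::comm_ring_1 pol \<Rightarrow> 'k pol \<Rightarrow> 'k pol \<Rightarrow> 'k pol \<Rightarrow> 'k pol" where
  "vfield y1 y2 y3 = (\<lambda>p. pderiv_var V1 p * y1 + pderiv_var V2 p * y2 + pderiv_var V3 p * y3)"

lemma pd_pconst_mult: "pderiv_var v (pconst c * p) = pconst c * pderiv_var v p"
  by (simp add: pd_mult)

lemma vfield_DerP: "vfield y1 y2 y3 \<in> DerP"
  unfolding DerP_def vfield_def
  by (auto simp: pd_add pd_mult pd_pconst_mult algebra_simps)

lemma vfield_pvar[simp]: "vfield y1 y2 y3 (pvar V1) = y1" "vfield y1 y2 y3 (pvar V2) = y2"
  "vfield y1 y2 y3 (pvar V3) = y3"
  by (simp_all add: vfield_def pd_pvar)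


definition free :: "var \<Rightarrow> 'k::comm_ring_1 pol \<Rightarrow> bool" where
  "free v p \<longleftrightarrow> (\<forall>m\<in>Poly_Mapping.keys p. Poly_Mapping.lookup m v = 0)"

lemma free_0[simp]: "free v 0" by (simp add: free_def)

lemma free_add: "free v p \<Longrightarrow> free v q \<Longrightarrow> free v (p + q)"
  using keys_add[of p q] unfolding free_def by blast

lemma free_uminus: "free v p \<Longrightarrow> free v (- p)"
  unfolding free_def by (simp add: in_keys_iff)

lemma free_diff: "free v p \<Longrightarrow> free v q \<Longrightarrow> free v (p - q)"
  by (simp only: diff_conv_add_uminus free_add free_uminus)

lemma free_mult: "free v p \<Longrightarrow> free v q \<Longrightarrow> free v (p * q)"
  using keys_mult[of p q] unfolding free_def by (force simp: lookup_add)

lemma free_pvar: "w \<noteq> v \<Longrightarrow> free v (pvar w)"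
  by (simp add: free_def pvar_def lookup_single)

lemma free_single: "Poly_Mapping.lookup m v = 0 \<Longrightarrow> free v (Poly_Mapping.single m c)"
  by (simp add: free_def)

lemma pvar_nz: "pvar v \<noteq> (0::'k::comm_ring_1 pol)"
  unfolding pvar_def by (metis lookup_single_eq lookup_zero one_neq_zero)

lemma decomp: "\<exists>p0 p1. (p::'k::comm_ring_1 pol) = p0 + pvar v * p1 \<and> free v p0"
proof (induction p rule: pol_induct)
  case zero then show ?case by (intro exI[of _ 0]) simp
next
  case (single m c)
  show ?case
  proof (cases "Poly_Mapping.lookup m v = 0")
    case True then show ?thesis
      by (intro exI[of _ "Poly_Mapping.single m c"] exI[of _ 0]) (simp add: free_single)
  next
    case False
    have "ev v + (m - ev v) = m"
      using False by (intro poly_mapping_eqI) (auto simp: lookup_add lookup_minus lookup_single when_def)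
    then have "pvar v * Poly_Mapping.single (m - ev v) c = Poly_Mapping.single m c"
      by (simp add: pvar_def mult_single)
    then show ?thesis
      by (intro exI[of _ 0] exI[of _ "Poly_Mapping.single (m - ev v) c"]) simp
  qed
next
  case (add p q)
  then obtain p0 p1 q0 q1 where "p = p0 + pvar v * p1" "free v p0" "q = q0 + pvar v * q1" "free v q0"
    by blast
  then show ?case
    by (intro exI[of _ "p0 + q0"] exI[of _ "p1 + q1"]) (simp add: free_add algebra_simps)
qed

lemma not_free_mult: assumes "free v p" "p = pvar v * r" shows "p = 0"
proof -
  have "Poly_Mapping.lookup m v \<noteq> 0" if "m \<in> Poly_Mapping.keys p" for m
  proof -
    from that keys_mult[of "pvar v" r] assms(2) obtain a b where
      "m = a + b" "a \<in> Poly_Mapping.keys (pvar v :: 'a pol)" by blast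
    then show ?thesis by (simp add: pvar_def lookup_add)
  qed
  with assms(1) have "Poly_Mapping.keys p = {}" unfolding free_def by blast
  then show ?thesis by simp
qed

lemma memb_lemma:
  fixes A B C c :: "'k::field pol"
  assumes uw: "u \<noteq> w" "u \<noteq> V3" "w \<noteq> V3"
    and eq: "pvar u * A + pvar w * B - 2 * pvar V3 * C = (pvar w * pvar u - pvar V3 * pvar V3) * c"
  shows "\<exists>a b. A = pvar w * a + pvar V3 * b"
proof -
  obtain A0 A1 where A: "A = A0 + pvar V3 * A1" "free V3 A0" using decomp by blast
  obtain B0 B1 where B: "B = B0 + pvar V3 * B1" "free V3 B0" using decomp by blast
  obtain c0 c1 where c: "c = c0 + pvar V3 * c1" "free V3 c0" using decomp by blast
  have E: "pvar u * A0 + pvar w * B0 - pvar w * pvar u * c0 =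
     pvar V3 * (pvar w * pvar u * c1 - pvar V3 * c - pvar u * A1 - pvar w * B1 + 2 * C)"
    using eq A(1) B(1) c(1) by algebra
  have "free V3 (pvar u * A0 + pvar w * B0 - pvar w * pvar u * c0)"
    using A(2) B(2) c(2) uw by (intro free_diff free_add free_mult free_pvar) auto
  from not_free_mult[OF this E] have E0: "pvar u * A0 + pvar w * B0 - pvar w * pvar u * c0 = 0" .
  obtain A00 A01 where A0: "A0 = A00 + pvar w * A01" "free w A00" using decomp by blast
  have E1: "pvar u * A00 = pvar w * (pvar u * c0 - B0 - pvar u * A01)"
    using E0 A0(1) by algebra
  have "free w (pvar u * A00)" using A0(2) uw by (intro free_mult free_pvar) auto
  from not_free_mult[OF this E1] have "A00 = 0" by (simp add: pvar_nz)
  then have "A = pvar w * A01 + pvar V3 * A1" using A A0 by simp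
  then show ?thesis by blast
qed

lemma inI_0[simp]: "inI 0" by (simp add: inI_def)
lemma inI_add: "inI p \<Longrightarrow> inI q \<Longrightarrow> inI (p + q)" by (simp add: inI_def)
lemma inI_diff: "inI p \<Longrightarrow> inI q \<Longrightarrow> inI (p - q)" by (simp add: inI_def)
lemma inI_uminus: "inI p \<Longrightarrow> inI (- p)" by (simp add: inI_def)
lemma inI_multL: "inI p \<Longrightarrow> inI (q * p)" by (simp add: inI_def)
lemma inI_multR: "inI p \<Longrightarrow> inI (p * q)" by (simp add: inI_def)
lemma inI_fpol: "inI (fpol * q)" by (simp add: inI_def)

lemma inI_cancel_x3:
  fixes q :: "'k::field pol"
  assumes "inI (pvar V3 * q)" shows "inI q"
proof -
  from assms obtain g where g: "pvar V3 * q = fpol * g" by (auto simp: inI_def)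
  obtain g0 g1 where G: "g = g0 + pvar V3 * g1" "free V3 g0" using decomp by blast
  have E: "pvar V1 * pvar V2 * g0 = pvar V3 * (q - fpol * g1 + pvar V3 * g0)"
    using g G(1) unfolding fpol_def by algebra
  have "free V3 (pvar V1 * pvar V2 * g0)" using G(2) by (intro free_mult free_pvar) auto
  from not_free_mult[OF this E] have "g0 = 0" by (simp add: pvar_nz)
  then have "pvar V3 * q = pvar V3 * (fpol * g1)" using g G by (simp add: algebra_simps)
  then have "q = fpol * g1" by (simp add: pvar_nz)
  then show ?thesis by (simp add: inI_fpol)
qed

lemma inI_cancel_const:
  fixes q :: "'k::field pol"
  assumes "inI (pconst c * q)" "c \<noteq> 0" shows "inI q"
proof -
  have "q = pconst (1/c) * (pconst c * q)" using assms(2)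
    by (simp add: pconst_mult flip: mult.assoc)
  then show ?thesis using inI_multL[OF assms(1)] by metis
qed


lemma DerP_fpol: assumes "D \<in> DerP"
  shows "D fpol = pvar V2 * D (pvar V1) + pvar V1 * D (pvar V2) - 2 * pvar V3 * D (pvar V3)"
  by (simp add: fpol_def DerP_diff[OF assms] DerP_D(3)[OF assms] algebra_simps)

lemma DerIP_f: assumes "X \<in> DerIP"
  shows "inI (pvar V2 * X (pvar V1) + pvar V1 * X (pvar V2) - 2 * pvar V3 * X (pvar V3))"
proof -
  have "X \<in> DerP" "inI (X fpol)" using assms by (auto simp: DerIP_def inI_def)
  then show ?thesis by (simp add: DerP_fpol)
qed

lemma inI_cancel_h:
  fixes q :: "'k::field_char_0 pol"
  assumes "inI (4 * pvar V3 * q)" shows "inI q"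
proof -
  have "inI (pconst 4 * (pvar V3 * q))" using assms by (simp add: mult.assoc)
  from inI_cancel_const[OF this] have "inI (pvar V3 * q)" by simp
  then show ?thesis by (rule inI_cancel_x3)
qed

definition Nf :: "('k::comm_ring_1 pol \<Rightarrow> 'k pol) \<Rightarrow> ('k pol \<Rightarrow> 'k pol) \<Rightarrow> 'k pol" where
  "Nf X Y = X (pvar V1) * Y (pvar V2) - X (pvar V2) * Y (pvar V1)"

definition om :: "('k::comm_ring_1 pol \<Rightarrow> 'k pol) \<Rightarrow> ('k pol \<Rightarrow> 'k pol) \<Rightarrow> 'k pol" where
  "om X Y = (SOME q. inI (4 * pvar V3 * q + Nf X Y))"

lemma om_spec: "inI (4 * pvar V3 * q + Nf X Y) \<Longrightarrow> inI (4 * pvar V3 * om X Y + Nf X Y)"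
  unfolding om_def by (rule someI)

lemma om_eq:
  fixes q :: "'k::field_char_0 pol"
  assumes "inI (4 * pvar V3 * q + Nf X Y)" shows "inI (om X Y - q)"
proof -
  have "inI ((4 * pvar V3 * om X Y + Nf X Y) - (4 * pvar V3 * q + Nf X Y))"
    using om_spec[OF assms] assms by (rule inI_diff)
  also have "(4 * pvar V3 * om X Y + Nf X Y) - (4 * pvar V3 * q + Nf X Y) = 4 * pvar V3 * (om X Y - q)"
    by algebra
  finally show ?thesis by (rule inI_cancel_h)
qed

lemma comps:
  fixes X :: "'k::field pol \<Rightarrow> 'k pol"
  assumes "X \<in> DerIP"
  shows "\<exists>a b a' b'. X (pvar V1) = pvar V1 * a + pvar V3 * b \<and> X (pvar V2) = pvar V2 * a' + pvar V3 * b'"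
proof -
  from DerIP_f[OF assms] obtain c where c:
    "pvar V2 * X (pvar V1) + pvar V1 * X (pvar V2) - 2 * pvar V3 * X (pvar V3) = fpol * c"
    by (auto simp: inI_def)
  have e1: "pvar V2 * X (pvar V1) + pvar V1 * X (pvar V2) - 2 * pvar V3 * X (pvar V3) =
      (pvar V1 * pvar V2 - pvar V3 * pvar V3) * c" using c by (simp add: fpol_def)
  have e2: "pvar V1 * X (pvar V2) + pvar V2 * X (pvar V1) - 2 * pvar V3 * X (pvar V3) =
      (pvar V2 * pvar V1 - pvar V3 * pvar V3) * c" using e1 by algebra
  obtain a b where "X (pvar V1) = pvar V1 * a + pvar V3 * b"
    using memb_lemma[of V2 V1, OF _ _ _ e1] by auto
  moreover obtain a' b' where "X (pvar V2) = pvar V2 * a' + pvar V3 * b'"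
    using memb_lemma[of V1 V2, OF _ _ _ e2] by auto
  ultimately show ?thesis by blast
qed

lemma pconst_quarter: "4 * pconst (1/4) = (1::'k::field_char_0 pol)"
proof -
  have "pconst 4 * pconst (1/4) = (pconst 1 :: 'k pol)" by (simp only: pconst_mult) simp
  then show ?thesis by simp
qed

lemma om_exists:
  fixes X Y :: "'k::field_char_0 pol \<Rightarrow> 'k pol"
  assumes "X \<in> DerIP" "Y \<in> DerIP"
  shows "\<exists>q. inI (4 * pvar V3 * q + Nf X Y)"
proof -
  obtain a b a' b' where X: "X (pvar V1) = pvar V1 * a + pvar V3 * b" "X (pvar V2) = pvar V2 * a' + pvar V3 * b'"
    using comps[OF assms(1)] by blast
  obtain c d c' d' where Y: "Y (pvar V1) = pvar V1 * c + pvar V3 * d" "Y (pvar V2) = pvar V2 * c' + pvar V3 * d'"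
    using comps[OF assms(2)] by blast
  define M where "M = pvar V3 * a * c' + pvar V1 * a * d' + pvar V2 * b * c' + pvar V3 * b * d'
      - (pvar V3 * a' * c + pvar V2 * a' * d + pvar V1 * b' * c + pvar V3 * b' * d)"
  define q where "q = - (pconst (1/4) * M)"
  have "4 * pvar V3 * q + Nf X Y = fpol * (a * c' - a' * c)"
    unfolding Nf_def X Y q_def M_def fpol_def using pconst_quarter[where 'k='k] by algebra
  then show ?thesis by (metis inI_fpol)
qed

lemma om_spec2: "X \<in> DerIP \<Longrightarrow> Y \<in> DerIP \<Longrightarrow> inI (4 * pvar V3 * om X Y + Nf (X::'k::field_char_0 pol \<Rightarrow> 'k pol) Y)"
  using om_exists om_spec by blast

lemma ham_vfield: "ham a = vfield (pbr a (pvar V1)) (pbr a (pvar V2)) (pbr a (pvar V3))"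
  by (rule ext) (simp add: ham_def vfield_def pbr_def pd_pvar algebra_simps)

lemma vfield_DerIP:
  fixes y1 :: "'k::comm_ring_1 pol"
  assumes "inI (pvar V2 * y1 + pvar V1 * y2 - 2 * pvar V3 * y3)"
  shows "vfield y1 y2 y3 \<in> DerIP"
proof -
  have D: "vfield y1 y2 y3 \<in> DerP" by (rule vfield_DerP)
  have "inI (vfield y1 y2 y3 p)" if "inI p" for p
  proof -
    from that obtain r where "p = fpol * r" by (auto simp: inI_def)
    then have "vfield y1 y2 y3 p = fpol * vfield y1 y2 y3 r + r * vfield y1 y2 y3 fpol"
      using DerP_D(3)[OF D] by simp
    also have "vfield y1 y2 y3 fpol = pvar V2 * y1 + pvar V1 * y2 - 2 * pvar V3 * y3"
      by (simp add: DerP_fpol[OF D])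
    finally show ?thesis using assms by (simp add: inI_add inI_fpol inI_multL)
  qed
  with D show ?thesis by (simp add: DerIP_def)
qed

lemma ham_DerIP: "ham (a::'k::comm_ring_1 pol) \<in> DerIP"
  unfolding ham_vfield
  by (rule vfield_DerIP) (simp add: pbr_def pd_pvar algebra_simps)

lemma iii:
  fixes a :: "'k::field_char_0 pol"
  assumes "X \<in> DerIP" shows "inI (om (ham a) X - X a)"
proof (rule om_eq)
  have D: "X \<in> DerP" using assms by (simp add: DerIP_def)
  have "4 * pvar V3 * X a + Nf (ham a) X = (- 2 * pderiv_var V3 a) *
      (pvar V2 * X (pvar V1) + pvar V1 * X (pvar V2) - 2 * pvar V3 * X (pvar V3))"
    unfolding DerP_chain[OF D, of a] by (simp add: Nf_def ham_def pbr_def pd_pvar algebra_simps)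
  then show "inI (4 * pvar V3 * X a + Nf (ham a) X)"
    using DerIP_f[OF assms] by (simp add: inI_multL inI_uminus)
qed

lemma bracket_DerIP: assumes "X \<in> DerIP" "Y \<in> DerIP" shows "der_bracket X Y \<in> DerIP"
proof -
  have X: "X \<in> DerP" and Y: "Y \<in> DerP" using assms by (auto simp: DerIP_def)
  have "der_bracket X Y \<in> DerP"
    unfolding DerP_def der_bracket_def
    by (auto simp: DerP_D[OF X] DerP_D[OF Y] DerP_diff[OF X] DerP_diff[OF Y] DerP_pconst[OF X] DerP_pconst[OF Y] algebra_simps)
  moreover have "inI (der_bracket X Y p)" if "inI p" for p
    using assms that unfolding der_bracket_def DerIP_def by (auto intro: inI_diff)
  ultimately show ?thesis by (simp add: DerIP_def)
qed


lemma DerIP_DerP: "X \<in> DerIP \<Longrightarrow> X \<in> DerP" by (simp add: DerIP_def)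
lemma DerIP_I: "X \<in> DerIP \<Longrightarrow> inI p \<Longrightarrow> inI (X p)" by (simp add: DerIP_def)

lemma antisym:
  fixes X Y :: "'k::field_char_0 pol \<Rightarrow> 'k pol"
  assumes "X \<in> DerIP" "Y \<in> DerIP" shows "inI (om X Y + om Y X)"
proof -
  have "inI ((4 * pvar V3 * om X Y + Nf X Y) + (4 * pvar V3 * om Y X + Nf Y X))"
    using om_spec2[OF assms] om_spec2[OF assms(2,1)] by (rule inI_add)
  also have "(4 * pvar V3 * om X Y + Nf X Y) + (4 * pvar V3 * om Y X + Nf Y X) = 4 * pvar V3 * (om X Y + om Y X)"
    unfolding Nf_def by algebra
  finally show ?thesis by (rule inI_cancel_h)
qed

lemma Alt2: "is_Alt2 (om :: ('k::field_char_0 pol \<Rightarrow> 'k pol) \<Rightarrow> _)"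
  unfolding is_Alt2_def
proof (intro conjI ballI allI impI)
  fix X X' Y :: "'k pol \<Rightarrow> 'k pol"
  assume X: "X \<in> DerIP" and X': "X' \<in> DerIP" and Y: "Y \<in> DerIP" and eq: "der_eq X X'"
  from eq obtain D where D: "\<And>p. X p - X' p = fpol * D p" by (auto simp: der_eq_def IDerP_def)
  have d1: "X (pvar V1) = X' (pvar V1) + fpol * D (pvar V1)" using D[of "pvar V1"] by (simp add: algebra_simps)
  have d2: "X (pvar V2) = X' (pvar V2) + fpol * D (pvar V2)" using D[of "pvar V2"] by (simp add: algebra_simps)
  have "4 * pvar V3 * om X' Y + Nf X Y = (4 * pvar V3 * om X' Y + Nf X' Y) + fpol * (D (pvar V1) * Y (pvar V2) - D (pvar V2) * Y (pvar V1))"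
    unfolding Nf_def d1 d2 by algebra
  then have "inI (4 * pvar V3 * om X' Y + Nf X Y)"
    by (simp only:) (rule inI_add[OF om_spec2[OF X' Y] inI_fpol])
  then show "inI (om X Y - om X' Y)" by (rule om_eq)
  have "4 * pvar V3 * om Y X' + Nf Y X = (4 * pvar V3 * om Y X' + Nf Y X') + fpol * (Y (pvar V1) * D (pvar V2) - Y (pvar V2) * D (pvar V1))"
    unfolding Nf_def d1 d2 by algebra
  then have "inI (4 * pvar V3 * om Y X' + Nf Y X)"
    by (simp only:) (rule inI_add[OF om_spec2[OF Y X'] inI_fpol])
  then show "inI (om Y X - om Y X')" by (rule om_eq)
next
  fix X Y Z :: "'k pol \<Rightarrow> 'k pol" and g h :: "'k pol"
  assume X: "X \<in> DerIP" and Y: "Y \<in> DerIP" and Z: "Z \<in> DerIP"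
  have "4 * pvar V3 * (g * om X Z + h * om Y Z) + Nf (\<lambda>p. g * X p + h * Y p) Z
     = g * (4 * pvar V3 * om X Z + Nf X Z) + h * (4 * pvar V3 * om Y Z + Nf Y Z)"
    unfolding Nf_def by algebra
  then have "inI (4 * pvar V3 * (g * om X Z + h * om Y Z) + Nf (\<lambda>p. g * X p + h * Y p) Z)"
    using om_spec2[OF X Z] om_spec2[OF Y Z] by (simp add: inI_add inI_multL)
  then show "inI (om (\<lambda>p. g * X p + h * Y p) Z - (g * om X Z + h * om Y Z))" by (rule om_eq)
next
  fix X :: "'k pol \<Rightarrow> 'k pol"
  have "inI (4 * pvar V3 * 0 + Nf X X)" by (simp add: Nf_def mult.commute)
  from om_eq[OF this] show "inI (om X X)" by simp
qed

lemma nondeg: "nondegenerate (om :: ('k::field_char_0 pol \<Rightarrow> 'k pol) \<Rightarrow> _)"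
  unfolding nondegenerate_def
proof (intro ballI impI)
  fix X :: "'k pol \<Rightarrow> 'k pol"
  assume X: "X \<in> DerIP" and H: "\<forall>Y\<in>DerIP. inI (om X Y)"
  have comp: "inI (X (pvar j))" for j
  proof -
    let ?Y = "ham (pvar j) :: 'k pol \<Rightarrow> 'k pol"
    have Y: "?Y \<in> DerIP" by (rule ham_DerIP)
    have "inI ((om X ?Y + om ?Y X) - om X ?Y - (om ?Y X - X (pvar j)))"
      using inI_diff[OF inI_diff[OF antisym[OF X Y] H[rule_format, OF Y]] iii[OF X, of "pvar j"]] .
    then show ?thesis by simp
  qed
  obtain g1 where g1: "X (pvar V1) = fpol * g1" using comp[of V1] by (auto simp: inI_def)
  obtain g2 where g2: "X (pvar V2) = fpol * g2" using comp[of V2] by (auto simp: inI_def)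
  obtain g3 where g3: "X (pvar V3) = fpol * g3" using comp[of V3] by (auto simp: inI_def)
  have "\<forall>p. X p = fpol * vfield g1 g2 g3 p"
    using DerP_chain[OF DerIP_DerP[OF X]] by (simp add: g1 g2 g3 vfield_def algebra_simps)
  then show "X \<in> IDerP" unfolding IDerP_def using vfield_DerP by blast
qed


definition sp :: "('k::comm_ring_1 pol \<Rightarrow> 'k pol) \<Rightarrow> ('k pol \<Rightarrow> 'k pol) \<Rightarrow> 'k pol" where
  "sp X Y = 4 * pvar V3 * om X Y + Nf X Y"

lemma DerP_num4: assumes "D \<in> DerP" shows "D (4 * p) = 4 * D p"
  using DerP_D(2)[OF assms, of 4 p] by simp

lemma DerP_sp: assumes D: "D \<in> DerP"
  shows "D (sp Y Z) = 4 * pvar V3 * D (om Y Z) + 4 * D (pvar V3) * om Y Z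
     + D (Y (pvar V1)) * Z (pvar V2) + Y (pvar V1) * D (Z (pvar V2))
     - D (Y (pvar V2)) * Z (pvar V1) - Y (pvar V2) * D (Z (pvar V1))"
proof -
  have "sp Y Z = 4 * (pvar V3 * om Y Z) + (Y (pvar V1) * Z (pvar V2) - Y (pvar V2) * Z (pvar V1))"
    by (simp add: sp_def Nf_def mult.assoc)
  then have "D (sp Y Z) = 4 * D (pvar V3 * om Y Z) + (D (Y (pvar V1) * Z (pvar V2)) - D (Y (pvar V2) * Z (pvar V1)))"
    by (simp only: DerP_D(1)[OF D] DerP_diff[OF D] DerP_num4[OF D])
  then show ?thesis by (simp only: DerP_D(3)[OF D]) (simp add: algebra_simps)
qed

lemma Dt_inI:
  fixes X0 :: "'k::field_char_0 pol \<Rightarrow> 'k pol"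
  assumes X0: "X0 \<in> DerIP" and X1: "X1 \<in> DerIP" and X2: "X2 \<in> DerIP"
  shows "inI (X0 (pvar V3) * Nf X1 X2 - X1 (pvar V3) * Nf X0 X2 + X2 (pvar V3) * Nf X0 X1)"
proof -
  let ?e = "\<lambda>X. pvar V2 * X (pvar V1) + pvar V1 * X (pvar V2) - 2 * pvar V3 * X (pvar V3)"
  have "inI (- (?e X0 * Nf X1 X2 - ?e X1 * Nf X0 X2 + ?e X2 * Nf X0 X1))"
    by (rule inI_uminus[OF inI_add[OF inI_diff[OF inI_multR[OF DerIP_f[OF X0]] inI_multR[OF DerIP_f[OF X1]]] inI_multR[OF DerIP_f[OF X2]]]])
  also have "- (?e X0 * Nf X1 X2 - ?e X1 * Nf X0 X2 + ?e X2 * Nf X0 X1) =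
     pconst 2 * (pvar V3 * (X0 (pvar V3) * Nf X1 X2 - X1 (pvar V3) * Nf X0 X2 + X2 (pvar V3) * Nf X0 X1))"
    unfolding Nf_def pconst_numeral by algebra
  finally have "inI (pconst 2 * (pvar V3 * (X0 (pvar V3) * Nf X1 X2 - X1 (pvar V3) * Nf X0 X2 + X2 (pvar V3) * Nf X0 X1)))" .
  from inI_cancel_const[OF this] have "inI (pvar V3 * (X0 (pvar V3) * Nf X1 X2 - X1 (pvar V3) * Nf X0 X2 + X2 (pvar V3) * Nf X0 X1))"
    by simp
  then show ?thesis by (rule inI_cancel_x3)
qed

lemma closed: "dR_closed (om :: ('k::field_char_0 pol \<Rightarrow> 'k pol) \<Rightarrow> _)"
  unfolding dR_closed_def
proof (intro ballI)
  fix X0 X1 X2 :: "'k pol \<Rightarrow> 'k pol"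
  assume X0: "X0 \<in> DerIP" and X1: "X1 \<in> DerIP" and X2: "X2 \<in> DerIP"
  note D0 = DerIP_DerP[OF X0] and D1 = DerIP_DerP[OF X1] and D2 = DerIP_DerP[OF X2]
  have sp: "inI (sp X Y)" if "X \<in> DerIP" "Y \<in> DerIP" for X Y :: "'k pol \<Rightarrow> 'k pol"
    unfolding sp_def using om_spec2[OF that] .
  have B01: "der_bracket X0 X1 \<in> DerIP" and B02: "der_bracket X0 X2 \<in> DerIP" and B12: "der_bracket X1 X2 \<in> DerIP"
    using bracket_DerIP X0 X1 X2 by blast+
  let ?Dt = "X0 (pvar V3) * Nf X1 X2 - X1 (pvar V3) * Nf X0 X2 + X2 (pvar V3) * Nf X0 X1"
  let ?R = "4 * pvar V3 * (X0 (sp X1 X2) - X1 (sp X0 X2) + X2 (sp X0 X1)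
       - sp (der_bracket X0 X1) X2 + sp (der_bracket X0 X2) X1 - sp (der_bracket X1 X2) X0)
     - 4 * (X0 (pvar V3) * sp X1 X2 - X1 (pvar V3) * sp X0 X2 + X2 (pvar V3) * sp X0 X1) + 4 * ?Dt"
  have key: "4 * pvar V3 * (4 * pvar V3 * dR2 om X0 X1 X2) = ?R"
    apply (simp only: DerP_sp[OF D0] DerP_sp[OF D1] DerP_sp[OF D2])
    apply (simp only: dR2_def sp_def Nf_def der_bracket_def)
    apply algebra
    done
  have i1: "inI (X0 (sp X1 X2) - X1 (sp X0 X2) + X2 (sp X0 X1)
       - sp (der_bracket X0 X1) X2 + sp (der_bracket X0 X2) X1 - sp (der_bracket X1 X2) X0)"
    using sp[OF B01 X2] sp[OF B02 X1] sp[OF B12 X0]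
      DerIP_I[OF X0 sp[OF X1 X2]] DerIP_I[OF X1 sp[OF X0 X2]] DerIP_I[OF X2 sp[OF X0 X1]]
    by (intro inI_add inI_diff)
  have i2: "inI (X0 (pvar V3) * sp X1 X2 - X1 (pvar V3) * sp X0 X2 + X2 (pvar V3) * sp X0 X1)"
    using sp[OF X1 X2] sp[OF X0 X2] sp[OF X0 X1] by (intro inI_add inI_diff inI_multL)
  have "inI ?R"
    by (rule inI_add[OF inI_diff[OF inI_multL[OF i1] inI_multL[OF i2]] inI_multL[OF Dt_inI[OF X0 X1 X2]]])
  then have "inI (4 * pvar V3 * (4 * pvar V3 * dR2 om X0 X1 X2))" by (simp only: key)
  then show "inI (dR2 om X0 X1 X2)" by (rule inI_cancel_h[OF inI_cancel_h])
qed

theorem mainTheorem3: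
  shows "\<exists>\<omega> :: ('k::field_char_0 pol \<Rightarrow> 'k pol) \<Rightarrow> ('k pol \<Rightarrow> 'k pol) \<Rightarrow> 'k pol.
           is_Alt2 \<omega> \<and> nondegenerate \<omega> \<and> dR_closed \<omega>
         \<and> (\<forall>a. \<forall>X\<in>DerIP. inI (\<omega> (ham a) X - X a))"
  using Alt2 nondeg closed iii by blast

end
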